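(* For $n=0,1,2,\dots$ let $\alpha_n=1/(n+1)!$, let $\beta_0=0$, $\beta_{n+1}=\sum_{k=0}^{n}\frac{1}{k!(k+2)!}$, and $\beta=\lim_{n\to\infty}\beta_n$. Define $f:\mathbb{R}\to\mathbb{R}$ by $f(x)=x$ if $x>1$; $f(x)=\alpha_{n+1}x+\beta_{n+1}$ if $\alpha_{n+1}<x\le\alpha_n$ ($n=0,1,2,\dots$); $f(0)=\beta$; and $f(x)=f(-x)$ if $x<0$. Then $f$ is continuous and convex with global minimizer $\bar x=0$, and $$T_{\operatorname{gph}\partial_p f}(0,0)=\{(w,z)\mid 0\le z\le w\}\cup\{(w,z)\mid 0\ge z\ge w\}.$$ Consequently, for each $w\in\operatorname{dom}D(\partial_p f)(0|0)$ with $|w|=1$ there is $z\in D(\partial_p f)(0|0)(w)$ with $zw\ge1$ (the sufficient condition of the second kind holds with $\kappa=1$), yet there exist $w\neq0$ and $z\in D(\partial f)(0|0)(w)$ with $zw=0$, and $0$ is not a strong local minimizer of $f$ (the quadratic growth condition fails at $0$).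
   Context: The proximal subdifferential is $\partial_p f(\bar x)=\{v\mid \liminf_{x\to\bar x}\frac{f(x)-f(\bar x)-\langle v,x-\bar x\rangle}{\|x-\bar x\|^2}>-\infty\}$; for convex $f$ it coincides with the convex and limiting subdifferential $\partial f$. The tangent cone is $T_\Omega(\bar u)=\{v\mid \exists t_k\downarrow0,\ v_k\to v,\ \bar u+t_kv_k\in\Omega\}$, and $DF(\bar x|\bar y)(w)=\{z\mid (w,z)\in T_{\operatorname{gph}F}(\bar x,\bar y)\}$. $\bar x$ is a strong local minimizer if there are $\kappa,\gamma>0$ with $f(x)-f(\bar x)\ge\frac\kappa2|x-\bar x|^2$ for $|x-\bar x|\le\gamma$. *)

theory Defs
  imports "HOL-Analysis.Analysis"
begin

definition prox_subdiff :: "(real \<Rightarrow> real) \<Rightarrow> real \<Rightarrow> real set" where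
  "prox_subdiff f xb = {v. Liminf (at xb)
      (\<lambda>x. ereal ((f x - f xb - v * (x - xb)) / (norm (x - xb))\<^sup>2)) > -\<infinity>}"

definition conv_subdiff :: "(real \<Rightarrow> real) \<Rightarrow> real \<Rightarrow> real set" where
  "conv_subdiff f xb = {v. \<forall>x. f x \<ge> f xb + v * (x - xb)}"

definition tangent_cone :: "'a::real_normed_vector set \<Rightarrow> 'a \<Rightarrow> 'a set" where
  "tangent_cone \<Omega> u = {v. \<exists>(t::nat \<Rightarrow> real) (vs::nat \<Rightarrow> 'a).
      (\<forall>k. t k > 0) \<and> t \<longlonglongrightarrow> 0 \<and> vs \<longlonglongrightarrow> v \<and> (\<forall>k. u + t k *\<^sub>R vs k \<in> \<Omega>)}"

definition gph :: "('a \<Rightarrow> 'b set) \<Rightarrow> ('a \<times> 'b) set" where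
  "gph F = {(x, y). y \<in> F x}"

definition graph_deriv ::
  "('a::real_normed_vector \<Rightarrow> 'b::real_normed_vector set) \<Rightarrow> 'a \<Rightarrow> 'b \<Rightarrow> 'a \<Rightarrow> 'b set" where
  "graph_deriv F xb yb w = {z. (w, z) \<in> tangent_cone (gph F) (xb, yb)}"

definition graph_deriv_dom ::
  "('a::real_normed_vector \<Rightarrow> 'b::real_normed_vector set) \<Rightarrow> 'a \<Rightarrow> 'b \<Rightarrow> 'a set" where
  "graph_deriv_dom F xb yb = {w. graph_deriv F xb yb w \<noteq> {}}"

definition strong_local_min :: "(real \<Rightarrow> real) \<Rightarrow> real \<Rightarrow> bool" where
  "strong_local_min f xb \<longleftrightarrow> (\<exists>\<kappa> \<gamma>. \<kappa> > 0 \<and> \<gamma> > 0 \<and>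
      (\<forall>x. \<bar>x - xb\<bar> \<le> \<gamma> \<longrightarrow> f x - f xb \<ge> \<kappa> / 2 * \<bar>x - xb\<bar>\<^sup>2))"

definition alpha :: "nat \<Rightarrow> real" where
  "alpha n = 1 / fact (n + 1)"

definition beta :: "nat \<Rightarrow> real" where
  "beta n = (\<Sum>k<n. 1 / (fact k * fact (k + 2)))"

definition betaL :: real where
  "betaL = lim beta"

definition fpos :: "real \<Rightarrow> real" where
  "fpos x = (if x > 1 then x
             else if x = 0 then betaL
             else (let n = (THE n. alpha (n + 1) < x \<and> x \<le> alpha n)
                   in alpha (n + 1) * x + beta (n + 1)))"

definition fex :: "real \<Rightarrow> real" where
  "fex x = (if x < 0 then fpos (- x) else fpos x)"

end

theory Submission
  imports Defs
begin

definition LL :: "nat \<Rightarrow> real \<Rightarrow> real" where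
  "LL m x = alpha m * x + beta m"

lemma alpha_pos: "alpha n > 0"
  by (simp add: alpha_def)

lemma alpha_Suc: "alpha (Suc n) = alpha n / (real n + 2)"
proof -
  have "fact (Suc n + 1) = (real n + 2) * (fact (n+1) :: real)"
    by (simp add: algebra_simps)
  then show ?thesis by (simp add: alpha_def field_simps)
qed

lemma alpha_Suc_less: "alpha (Suc n) < alpha n"
  using alpha_pos[of n] by (simp add: alpha_Suc field_simps add_pos_nonneg)

lemma alpha_0: "alpha 0 = 1" by (simp add: alpha_def)

lemma alpha_decseq: "m \<le> n \<Longrightarrow> alpha n \<le> alpha m"
proof (induction n rule: dec_induct)
  case base then show ?case by simp
next
  case (step n) then show ?case using alpha_Suc_less[of n] by linarith
qed

lemma alpha_strict: "m < n \<Longrightarrow> alpha n < alpha m"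
  using alpha_decseq[of "Suc m" n] alpha_Suc_less[of m] by simp

lemma alpha_le1: "alpha n \<le> 1"
  using alpha_decseq[of 0 n] alpha_0 by simp

lemma alpha_le_inv: "alpha n \<le> inverse (real (Suc n))"
proof -
  have "Suc n \<le> fact (Suc n)" by (rule fact_ge_self)
  then have "real (Suc n) \<le> real (fact (Suc n))" by (simp only: of_nat_le_iff)
  then have "real (Suc n) \<le> fact (Suc n)" by (simp only: of_nat_fact)
  then show ?thesis unfolding alpha_def
    by (simp add: field_simps)
qed

lemma alpha_lim: "alpha \<longlonglongrightarrow> 0"
proof (rule tendsto_sandwich[of "\<lambda>_. 0" _ _ "\<lambda>n. inverse (real (Suc n))"])
  show "\<forall>\<^sub>F n in sequentially. 0 \<le> alpha n" by (intro always_eventually allI) (simp add: alpha_pos less_imp_le)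
  show "\<forall>\<^sub>F n in sequentially. alpha n \<le> inverse (real (Suc n))" using alpha_le_inv by auto
  show "(\<lambda>n. 0::real) \<longlonglongrightarrow> 0" by simp
  show "(\<lambda>n. inverse (real (Suc n))) \<longlonglongrightarrow> 0" by (rule LIMSEQ_inverse_real_of_nat)
qed

lemma beta_0: "beta 0 = 0" by (simp add: beta_def)

lemma beta_Suc: "beta (Suc n) = beta n + alpha n * (alpha n - alpha (Suc n))"
proof -
  have "beta (Suc n) = beta n + 1 / (fact n * fact (n + 2))"
    by (simp add: beta_def)
  moreover have "alpha n * (alpha n - alpha (Suc n)) = 1 / (fact n * fact (n + 2))"
  proof -
    define F :: real where "F = fact n"
    have F: "F > 0" unfolding F_def by simp
    have f1: "alpha n = 1 / ((real n + 1) * F)" unfolding alpha_def F_def by simp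
    have f2: "fact (n+2) = (real n + 2) * (real n + 1) * F"
      unfolding F_def by (simp add: algebra_simps numeral_2_eq_2)
    have f3: "alpha (Suc n) = 1 / ((real n + 2) * (real n + 1) * F)"
      unfolding alpha_Suc f1 by (simp add: field_simps)
    have gen: "\<And>a F::real. a > 0 \<Longrightarrow> F > 0 \<Longrightarrow>
       1/(a*F) * (1/(a*F) - 1/((a+1)*a*F)) = 1/(F*((a+1)*a*F))"
    proof -
      fix a F :: real assume a: "a > 0" and F: "F > 0"
      have d: "1/(a*F) - 1/((a+1)*a*F) = 1/((a+1)*F)" using a F by (simp add: divide_simps)
      show "1/(a*F) * (1/(a*F) - 1/((a+1)*a*F)) = 1/(F*((a+1)*a*F))"
        unfolding d using a F by (simp add: field_simps)
    qed
    have e: "real n + 2 = (real n + 1) + 1" by simp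
    show ?thesis unfolding f1 f3 f2 F_def[symmetric] e using gen[of "real n + 1" F] F
      by simp
  qed
  ultimately show ?thesis by simp
qed

lemma beta_inc: "beta n \<le> beta (Suc n)"
  using alpha_Suc_less[of n] alpha_pos[of n] by (simp add: beta_Suc)

lemma LL_diff: "LL m x - LL (Suc m) x = (alpha m - alpha (Suc m)) * (x - alpha m)"
  by (simp add: LL_def beta_Suc algebra_simps)

lemma LL_down: assumes "alpha p \<le> x" "p \<le> m" shows "LL m x \<le> LL p x"
  using assms(2)
proof (induction m rule: dec_induct)
  case base then show ?case by simp
next
  case (step n)
  have "alpha n \<le> alpha p" using alpha_decseq step by simp
  then have "0 \<le> (alpha n - alpha (Suc n)) * (x - alpha n)"
    using alpha_Suc_less[of n] step assms(1) by simp
  then show ?case using LL_diff[of n x] step by linarith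
qed

lemma LL_up: assumes "(\<forall>j<p. x \<le> alpha j)" "m \<le> p" shows "LL m x \<le> LL p x"
  using assms(2)
proof (induction m rule: inc_induct)
  case base then show ?case by simp
next
  case (step n)
  have "x \<le> alpha n" using step assms(1) by simp
  then have "0 \<le> (alpha n - alpha (Suc n)) * (alpha n - x)"
    using alpha_Suc_less[of n] by simp
  then show ?case using LL_diff[of n x] step by (simp add: algebra_simps)
qed

lemma LL_max: "alpha p \<le> x \<Longrightarrow> (\<forall>j<p. x \<le> alpha j) \<Longrightarrow> LL m x \<le> LL p x"
  using LL_down LL_up by (cases "p \<le> m") auto

lemma exists_piece:
  assumes "0 < x" "x \<le> 1"
  shows "\<exists>n. alpha (n + 1) < x \<and> x \<le> alpha n"
proof -
  have "\<forall>\<^sub>F n in sequentially. alpha n < x"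
    using alpha_lim assms(1) by (simp add: order_tendsto_iff)
  then obtain N where N: "alpha N < x" by (auto simp: eventually_sequentially)
  define n0 where "n0 = (LEAST n. alpha n < x)"
  have a: "alpha n0 < x" unfolding n0_def by (rule LeastI[of _ N]) (rule N)
  have "n0 \<noteq> 0"
  proof
    assume "n0 = 0" then show False using a alpha_0 assms by simp
  qed
  then obtain n where n: "n0 = Suc n" by (cases n0) auto
  have "\<not> alpha n < x" using not_less_Least[of n "\<lambda>n. alpha n < x"] n unfolding n0_def by simp
  then show ?thesis using a n by auto
qed

lemma piece_unique:
  assumes "alpha (n + 1) < x \<and> x \<le> alpha n" "alpha (m + 1) < x \<and> x \<le> alpha m"
  shows "m = n"
proof (rule ccontr)
  assume "m \<noteq> n"
  then consider "n < m" | "m < n" by linarith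
  then show False
  proof cases
    case 1 then have "alpha m \<le> alpha (n+1)" using alpha_decseq by simp
    then show False using assms by linarith
  next
    case 2 then have "alpha n \<le> alpha (m+1)" using alpha_decseq by simp
    then show False using assms by linarith
  qed
qed

lemma fpos_piece:
  assumes "alpha (n + 1) < x" "x \<le> alpha n"
  shows "fpos x = LL (Suc n) x"
proof -
  have x1: "\<not> x > 1" using assms alpha_le1[of n] by linarith
  have x0: "x \<noteq> 0" using assms alpha_pos[of "n+1"] by linarith
  have "(THE n. alpha (n + 1) < x \<and> x \<le> alpha n) = n"
    by (rule the_equality) (use assms piece_unique in auto)
  then show ?thesis unfolding fpos_def using x1 x0 by (simp add: LL_def Let_def)
qed

lemma fpos_gen:
  assumes "x > 0"
  shows "\<exists>p. fpos x = LL p x \<and> alpha p \<le> x \<and> (\<forall>j<p. x \<le> alpha j)"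
proof (cases "x > 1")
  case True
  then show ?thesis
    by (intro exI[of _ 0]) (simp add: fpos_def LL_def alpha_0 beta_0)
next
  case False
  then obtain n where n: "alpha (n + 1) < x" "x \<le> alpha n"
    using exists_piece assms by force
  have "\<forall>j<Suc n. x \<le> alpha j"
    using n(2) alpha_decseq by (metis less_Suc_eq_le order_trans)
  then show ?thesis using fpos_piece[OF n] n by (intro exI[of _ "Suc n"]) auto
qed

lemma fpos_ge_LL: "x > 0 \<Longrightarrow> LL m x \<le> fpos x"
  using fpos_gen LL_max by metis

lemma fpos_alpha: "fpos (alpha n) = LL (Suc n) (alpha n)"
  using fpos_piece[of n "alpha n"] alpha_Suc_less[of n] by simp

lemma beta_conv: "beta \<longlonglongrightarrow> betaL \<and> (\<forall>m. beta m \<le> betaL)"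
proof -
  have inc: "incseq beta" using beta_inc by (simp add: incseq_SucI)
  have "\<forall>i. beta i \<le> fpos 1"
  proof
    fix i
    have "beta i \<le> LL i 1" using alpha_pos[of i] by (simp add: LL_def)
    also have "\<dots> \<le> fpos 1" by (rule fpos_ge_LL) simp
    finally show "beta i \<le> fpos 1" .
  qed
  then obtain L where L: "beta \<longlonglongrightarrow> L" "\<forall>i. beta i \<le> L"
    using incseq_convergent[OF inc] by blast
  have "betaL = L" unfolding betaL_def using L(1) by (rule limI)
  then show ?thesis using L by simp
qed

lemma fex_abs: "fex y = fpos \<bar>y\<bar>"
  by (simp add: fex_def abs_if)

lemma fex0: "fex 0 = betaL"
  by (simp add: fex_def fpos_def)

lemma fex_even: "fex (- y) = fex y"
  by (simp add: fex_abs)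

lemma fex_ge: "alpha m * \<bar>y\<bar> + beta m \<le> fex y"
proof (cases "y = 0")
  case True then show ?thesis using beta_conv by (simp add: fex0)
next
  case False
  then show ?thesis using fpos_ge_LL[of "\<bar>y\<bar>" m] by (simp add: fex_abs LL_def)
qed

lemma fex_ge_betaL: "betaL \<le> fex y"
proof -
  have "\<forall>m. beta m \<le> fex y"
  proof
    fix m
    have "0 \<le> alpha m * \<bar>y\<bar>" using alpha_pos[of m] by simp
    then show "beta m \<le> fex y" using fex_ge[of m y] by linarith
  qed
  then show ?thesis using LIMSEQ_le_const2[of beta betaL "fex y"] beta_conv by blast
qed

lemma fex_support: "\<exists>a b. fex z = a * z + b \<and> (\<forall>y. a * y + b \<le> fex y)"
proof (cases "z = 0")
  case True
  show ?thesis
    apply (rule exI[of _ 0], rule exI[of _ betaL])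
    using True fex_ge_betaL by (simp add: fex0)
next
  case False
  then obtain p where p: "fpos \<bar>z\<bar> = LL p \<bar>z\<bar>" using fpos_gen[of "\<bar>z\<bar>"] by auto
  have ap: "alpha p > 0" by (rule alpha_pos)
  show ?thesis
  proof (cases "z > 0")
    case True
    show ?thesis
    proof (rule exI[of _ "alpha p"], rule exI[of _ "beta p"], intro conjI allI)
      show "fex z = alpha p * z + beta p" using p True by (simp add: fex_abs LL_def)
      fix y
      have "alpha p * y \<le> alpha p * \<bar>y\<bar>" using ap by (simp add: mult_left_mono)
      then show "alpha p * y + beta p \<le> fex y" using fex_ge[of p y] by linarith
    qed
  next
    case False
    then have zn: "z < 0" using \<open>z \<noteq> 0\<close> by simp
    show ?thesis
    proof (rule exI[of _ "- alpha p"], rule exI[of _ "beta p"], intro conjI allI)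
      show "fex z = - alpha p * z + beta p" using p zn by (simp add: fex_abs LL_def)
      fix y
      have "- alpha p * y \<le> alpha p * \<bar>y\<bar>" using ap
        by (metis abs_ge_minus_self minus_mult_commute mult_left_mono less_imp_le)
      then show "- alpha p * y + beta p \<le> fex y" using fex_ge[of p y] by linarith
    qed
  qed
qed

lemma fex_convex: "convex_on UNIV fex"
proof (rule convex_onI)
  fix t x y :: real
  assume t: "0 < t" "t < 1"
  obtain a b where ab: "fex ((1 - t) *\<^sub>R x + t *\<^sub>R y) = a * ((1 - t) *\<^sub>R x + t *\<^sub>R y) + b"
    "\<forall>y. a * y + b \<le> fex y" using fex_support by blast
  have "a * ((1 - t) *\<^sub>R x + t *\<^sub>R y) + b = (1 - t) * (a * x + b) + t * (a * y + b)"
    by (simp add: algebra_simps)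
  also have "\<dots> \<le> (1 - t) * fex x + t * fex y"
    using ab(2) t by (intro add_mono mult_left_mono) auto
  finally show "fex ((1 - t) *\<^sub>R x + t *\<^sub>R y) \<le> (1 - t) * fex x + t * fex y"
    using ab(1) by simp
qed simp

lemma fex_cont: "continuous_on UNIV fex"
  by (rule convex_on_continuous[OF open_UNIV fex_convex])

lemma fex_F1:
  assumes "0 \<le> x" "x \<le> y"
  shows "fex y - fex x \<le> y * (y - x)"
proof (cases "y = 0")
  case True then show ?thesis using assms by simp
next
  case False
  then have yp: "y > 0" using assms by simp
  obtain p where p: "fpos y = LL p y" "alpha p \<le> y" using fpos_gen[OF yp] by auto
  have "fex y = alpha p * y + beta p" using p yp by (simp add: fex_abs LL_def)
  moreover have "alpha p * x + beta p \<le> fex x" using fex_ge[of p x] assms by simp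
  moreover have "alpha p * (y - x) \<le> y * (y - x)" using p assms by (simp add: mult_right_mono)
  ultimately show ?thesis by (simp add: algebra_simps)
qed

lemma fex_F2:
  assumes "0 \<le> y" "y \<le> x"
  shows "fex y \<le> fex x"
proof (cases "y = 0")
  case True then show ?thesis using fex_ge_betaL by (simp add: fex0)
next
  case False
  then have yp: "y > 0" using assms by simp
  obtain p where p: "fpos y = LL p y" using fpos_gen[OF yp] by auto
  have "fex y = alpha p * y + beta p" using p yp by (simp add: fex_abs LL_def)
  moreover have "alpha p * x + beta p \<le> fex x" using fex_ge[of p x] assms by simp
  moreover have "alpha p * y \<le> alpha p * x" using alpha_pos[of p] assms by simp
  ultimately show ?thesis by simp
qed

lemma helper:
  fixes a w z :: real
  assumes "0 \<le> z" "z \<le> w" "0 < w" "0 < a"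
  shows "a / (real k + 2) \<le> a / w * (z + (w - z) * inverse (real (Suc (Suc k))))"
    and "a / w * (z + (w - z) * inverse (real (Suc (Suc k)))) \<le> a"
proof -
  define q where "q = inverse (real k + 2)"
  have q: "0 < q" "q \<le> 1" unfolding q_def by (auto simp: inverse_le_1_iff)
  have e: "inverse (real (Suc (Suc k))) = q" unfolding q_def by simp
  have e2: "a / (real k + 2) = a * q" unfolding q_def by (simp add: divide_inverse)
  define r where "r = z / w"
  have r: "0 \<le> r" "r \<le> 1" unfolding r_def using assms by auto
  have e3: "a / w * (z + (w - z) * q) = a * (r + (1 - r) * q)"
    unfolding r_def using assms by (simp add: field_simps)
  have "q \<le> r + (1 - r) * q" using r q by (simp add: algebra_simps mult_left_le_one_le)
  then show "a / (real k + 2) \<le> a / w * (z + (w - z) * inverse (real (Suc (Suc k))))"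
    unfolding e e2 e3 using assms by (simp add: mult_left_mono)
  have "r + (1 - r) * q \<le> 1" using r q
    by (metis add.commute diff_add_cancel diff_ge_0_iff_ge mult_left_le add_left_mono)
  then show "a / w * (z + (w - z) * inverse (real (Suc (Suc k)))) \<le> a"
    unfolding e e3 using assms by (simp add: mult_left_le)
qed

lemma eps_le:
  fixes v a K d :: real
  assumes "d > 0" "\<And>h. 0 < h \<Longrightarrow> h < d \<Longrightarrow> v \<le> a + K * h"
  shows "v \<le> a"
proof (rule ccontr)
  assume "\<not> v \<le> a"
  then have va: "v - a > 0" by simp
  define h where "h = min (d/2) ((v - a) / (2 * (\<bar>K\<bar> + 1)))"
  have hp: "h > 0" unfolding h_def using assms va by simp
  have hd: "h < d" unfolding h_def using assms by simp
  have "K * h \<le> (\<bar>K\<bar> + 1) * h" using hp by (intro mult_right_mono) auto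
  also have "\<dots> \<le> (\<bar>K\<bar> + 1) * ((v - a) / (2 * (\<bar>K\<bar> + 1)))"
    unfolding h_def by (intro mult_left_mono) auto
  also have "\<dots> = (v - a) / 2" by (simp add: field_simps)
  finally have k2: "K * h \<le> (v - a) / 2" .
  have "(v - a) / 2 < v - a" using va by simp
  then have "K * h < v - a" using k2 by linarith
  then show False using assms(2)[OF hp hd] by linarith
qed

lemma divh:
  fixes c h A :: real
  assumes "h > 0" "c * h\<^sup>2 \<le> A * h"
  shows "c * h \<le> A"
proof -
  have "h * (c * h) \<le> h * A" using assms(2) by (simp add: power2_eq_square algebra_simps)
  then show ?thesis using assms(1) by simp
qed

lemma prox_bound:
  assumes "v \<in> prox_subdiff f x"
  shows "\<exists>c d. d > 0 \<and> (\<forall>h. h \<noteq> 0 \<and> \<bar>h\<bar> < d \<longrightarrow> c * h\<^sup>2 \<le> f (x + h) - f x - v * h)"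
proof -
  let ?g = "\<lambda>y. ereal ((f y - f x - v * (y - x)) / (norm (y - x))\<^sup>2)"
  have "- \<infinity> < Liminf (at x) ?g" using assms by (simp add: prox_subdiff_def)
  then obtain c where c: "ereal c < Liminf (at x) ?g" using ereal_dense2 by blast
  have "eventually (\<lambda>y. ereal c < ?g y) (at x)" by (rule less_LiminfD[OF c])
  then obtain d where d: "d > 0" "\<And>y. y \<noteq> x \<Longrightarrow> dist y x < d \<Longrightarrow> ereal c < ?g y"
    unfolding eventually_at by blast
  show ?thesis
  proof (rule exI[of _ c], rule exI[of _ d], intro conjI allI impI)
    show "d > 0" by fact
    fix h :: real assume h: "h \<noteq> 0 \<and> \<bar>h\<bar> < d"
    have "ereal c < ?g (x + h)" using d(2)[of "x + h"] h by (simp add: dist_real_def)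
    then have "c < (f (x + h) - f x - v * h) / h\<^sup>2" by simp
    moreover have "h\<^sup>2 > 0" using h by simp
    ultimately show "c * h\<^sup>2 \<le> f (x + h) - f x - v * h"
      by (simp add: pos_less_divide_eq less_imp_le)
  qed
qed

lemma prox_graph:
  assumes "v \<in> prox_subdiff fex x"
  shows "(0 \<le> v \<and> v \<le> x) \<or> (v \<le> 0 \<and> x \<le> v)"
proof -
  obtain c d where d: "d > 0"
    and cd: "\<And>h. h \<noteq> 0 \<Longrightarrow> \<bar>h\<bar> < d \<Longrightarrow> c * h\<^sup>2 \<le> fex (x + h) - fex x - v * h"
    using prox_bound[OF assms] by blast
  show ?thesis
  proof (cases "x \<ge> 0")
    case True
    have "v \<le> x"
    proof (rule eps_le[OF d])
      fix h :: real assume h: "0 < h" "h < d"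
      have "c * h\<^sup>2 \<le> fex (x + h) - fex x - v * h" using cd h by simp
      also have "\<dots> \<le> (x + h) * h - v * h" using fex_F1[of x "x + h"] True h by simp
      finally have "c * h\<^sup>2 \<le> (x + h - v) * h" by (simp add: algebra_simps)
      then have "c * h \<le> x + h - v" using divh h by blast
      then show "v \<le> x + (1 - c) * h" by (simp add: algebra_simps)
    qed
    moreover have "0 \<le> v"
    proof (cases "x = 0")
      case True
      have "- v \<le> 0"
      proof (rule eps_le[OF d])
        fix h :: real assume h: "0 < h" "h < d"
        have "c * (-h)\<^sup>2 \<le> fex (x + - h) - fex x - v * (- h)" using cd[of "- h"] h by simp
        also have "\<dots> = fex h - fex 0 + v * h" using True fex_even[of h] by simp
        also have "\<dots> \<le> h * h + v * h" using fex_F1[of 0 h] h by simp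
        finally have "c * h\<^sup>2 \<le> (h + v) * h" by (simp add: algebra_simps)
        then have "c * h \<le> h + v" using divh h by blast
        then show "- v \<le> 0 + (1 - c) * h" by (simp add: algebra_simps)
      qed
      then show ?thesis by simp
    next
      case False
      then have xp: "x > 0" using True by simp
      have "- v \<le> 0"
      proof (rule eps_le[of "min d x"])
        show "min d x > 0" using d xp by simp
        fix h :: real assume h: "0 < h" "h < min d x"
        have "c * (-h)\<^sup>2 \<le> fex (x + - h) - fex x - v * (- h)" using cd[of "- h"] h by simp
        also have "\<dots> \<le> v * h" using fex_F2[of "x - h" x] h by simp
        finally have "c * h\<^sup>2 \<le> v * h" by simp
        then have "c * h \<le> v" using divh h by blast
        then show "- v \<le> 0 + (- c) * h" by simp
      qed
      then show ?thesis by simp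
    qed
    ultimately show ?thesis by simp
  next
    case False
    then have xn: "x < 0" by simp
    have "v \<le> 0"
    proof (rule eps_le[of "min d (- x)"])
      show "min d (- x) > 0" using d xn by simp
      fix h :: real assume h: "0 < h" "h < min d (- x)"
      have "c * h\<^sup>2 \<le> fex (x + h) - fex x - v * h" using cd h by simp
      also have "fex (x + h) = fex (- x - h)" using fex_even[of "x + h"] by simp
      also have "fex x = fex (- x)" using fex_even[of x] by simp
      also have "fex (- x - h) - fex (- x) - v * h \<le> - v * h"
        using fex_F2[of "- x - h" "- x"] h by simp
      finally have "c * h\<^sup>2 \<le> (- v) * h" by simp
      then have "c * h \<le> - v" using divh h by blast
      then show "v \<le> 0 + (- c) * h" by simp
    qed
    moreover have "- v \<le> - x"
    proof (rule eps_le[OF d])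
      fix h :: real assume h: "0 < h" "h < d"
      have "c * (-h)\<^sup>2 \<le> fex (x + - h) - fex x - v * (- h)" using cd[of "- h"] h by simp
      also have "fex (x + - h) = fex (- x + h)" using fex_even[of "- x + h"] by simp
      also have "fex x = fex (- x)" using fex_even[of x] by simp
      also have "fex (- x + h) - fex (- x) - v * (- h) \<le> (- x + h) * h + v * h"
        using fex_F1[of "- x" "- x + h"] h xn by simp
      finally have "c * h\<^sup>2 \<le> (- x + h + v) * h" by (simp add: algebra_simps)
      then have "c * h \<le> - x + h + v" using divh h by blast
      then show "- v \<le> - x + (1 - c) * h" by (simp add: algebra_simps)
    qed
    ultimately show ?thesis by simp
  qed
qed

definition CC :: "(real \<times> real) set" where
  "CC = {(w, z). 0 \<le> z \<and> z \<le> w} \<union> {(w, z). 0 \<ge> z \<and> z \<ge> w}"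

lemma CC_closed: "closed CC"
proof -
  have "CC = ({p. 0 \<le> snd p} \<inter> {p. snd p \<le> fst p}) \<union> ({p. snd p \<le> 0} \<inter> {p. fst p \<le> snd p})"
    unfolding CC_def by auto
  also have "closed \<dots>"
    by (intro closed_Un closed_Int closed_Collect_le continuous_intros)
  finally show ?thesis .
qed

lemma tc_sub:
  assumes "\<And>x v. v \<in> F x \<Longrightarrow> (x, v) \<in> CC"
  shows "tangent_cone (gph F) (0, 0) \<subseteq> CC"
proof
  fix p assume "p \<in> tangent_cone (gph F) (0, 0)"
  then obtain t vs where t: "\<forall>k. t k > 0" "vs \<longlonglongrightarrow> p"
    and mem: "\<forall>k. (0, 0) + t k *\<^sub>R vs k \<in> gph F"
    unfolding tangent_cone_def by blast
  have "\<And>k. vs k \<in> CC"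
  proof -
    fix k
    obtain a b where ab: "vs k = (a, b)" by fastforce
    have "(t k * a, t k * b) \<in> CC" using mem[rule_format, of k] assms ab by (simp add: gph_def)
    then show "vs k \<in> CC" using t(1)[rule_format, of k] ab
      unfolding CC_def by (auto simp: zero_le_mult_iff mult_le_0_iff)
  qed
  then show "p \<in> CC" using closed_sequentially[OF CC_closed] t(2) by blast
qed

lemma conv_prox: "v \<in> conv_subdiff f x \<Longrightarrow> v \<in> prox_subdiff f x"
proof -
  assume v: "v \<in> conv_subdiff f x"
  let ?g = "\<lambda>y. ereal ((f y - f x - v * (y - x)) / (norm (y - x))\<^sup>2)"
  have "\<forall>y. 0 \<le> ?g y"
  proof
    fix y
    have "f x + v * (y - x) \<le> f y" using v by (simp add: conv_subdiff_def)
    then have "0 \<le> f y - f x - v * (y - x)" by simp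
    then show "0 \<le> ?g y" by simp
  qed
  then have "0 \<le> Liminf (at x) ?g" by (intro Liminf_bounded always_eventually) auto
  then show ?thesis unfolding prox_subdiff_def by (auto simp: less_le_trans)
qed

lemma conv_alpha:
  assumes "alpha (Suc n) \<le> s" "s \<le> alpha n"
  shows "s \<in> conv_subdiff fex (alpha n)" "- s \<in> conv_subdiff fex (- alpha n)"
proof -
  have fa: "fex (alpha n) = LL (Suc n) (alpha n)"
    using fpos_alpha alpha_pos[of n] by (simp add: fex_abs)
  have fa2: "fex (alpha n) = LL n (alpha n)" using fa LL_diff[of n "alpha n"] by simp
  have geL: "\<And>m y. LL m y \<le> fex y"
  proof -
    fix m y
    have "alpha m * y \<le> alpha m * \<bar>y\<bar>" using alpha_pos[of m] by (simp add: mult_left_mono)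
    then show "LL m y \<le> fex y" using fex_ge[of m y] by (simp add: LL_def)
  qed
  have key: "\<And>y. fex (alpha n) + s * (y - alpha n) \<le> fex y"
  proof -
    fix y
    show "fex (alpha n) + s * (y - alpha n) \<le> fex y"
    proof (cases "y \<ge> alpha n")
      case True
      then have "s * (y - alpha n) \<le> alpha n * (y - alpha n)" using assms by (simp add: mult_right_mono)
      then have "fex (alpha n) + s * (y - alpha n) \<le> LL n y" using fa2 by (simp add: LL_def algebra_simps)
      then show ?thesis using geL[of n y] by linarith
    next
      case False
      then have "alpha (Suc n) * (alpha n - y) \<le> s * (alpha n - y)" using assms by (simp add: mult_right_mono)
      then have "fex (alpha n) + s * (y - alpha n) \<le> LL (Suc n) y" using fa by (simp add: LL_def algebra_simps)
      then show ?thesis using geL[of "Suc n" y] by linarith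
    qed
  qed
  then show "s \<in> conv_subdiff fex (alpha n)" by (simp add: conv_subdiff_def)
  show "- s \<in> conv_subdiff fex (- alpha n)"
    unfolding conv_subdiff_def
  proof (intro CollectI allI)
    fix y
    have "fex (alpha n) + s * (- y - alpha n) \<le> fex (- y)" by (rule key)
    then show "fex (- alpha n) + - s * (y - - alpha n) \<le> fex y"
      using fex_even[of y] fex_even[of "alpha n"] by (simp add: algebra_simps)
  qed
qed

lemma conv_0: "0 \<in> conv_subdiff fex 0"
  using fex_ge_betaL by (simp add: conv_subdiff_def fex0)

lemma inv_lim: "(\<lambda>k. inverse (real (Suc (Suc k)))) \<longlonglongrightarrow> 0"
  using LIMSEQ_Suc[OF LIMSEQ_inverse_real_of_nat] by simp

lemma tc_sup:
  assumes "\<And>x. conv_subdiff fex x \<subseteq> F x"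
  shows "CC \<subseteq> tangent_cone (gph F) (0, 0)"
proof
  fix p assume p: "p \<in> CC"
  obtain w z where wz: "p = (w, z)" by fastforce
  define vs where "vs = (\<lambda>k::nat. (w, z + (w - z) * inverse (real (Suc (Suc k)))))"
  have vs_lim: "vs \<longlonglongrightarrow> (w, z)"
  proof -
    have "(\<lambda>k. z + (w - z) * inverse (real (Suc (Suc k)))) \<longlonglongrightarrow> z + (w - z) * 0"
      by (intro tendsto_intros inv_lim)
    then show ?thesis unfolding vs_def by (intro tendsto_Pair tendsto_const) simp
  qed
  consider "w = 0" | "w > 0" | "w < 0" by linarith
  then show "p \<in> tangent_cone (gph F) (0, 0)"
  proof cases
    case 1
    then have z0: "z = 0" using p wz unfolding CC_def by auto
    have "(0::real, 0::real) \<in> gph F" using conv_0 assms by (auto simp: gph_def)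
    then show ?thesis unfolding tangent_cone_def wz 1 z0
      by (intro CollectI exI[of _ alpha] exI[of _ "\<lambda>_. (0, 0)"])
         (simp add: alpha_pos alpha_lim)
  next
    case 2
    then have zw: "0 \<le> z" "z \<le> w" using p wz unfolding CC_def by auto
    have mem: "(0, 0) + (alpha k / w) *\<^sub>R vs k \<in> gph F" for k
    proof -
      have e: "(0, 0) + (alpha k / w) *\<^sub>R vs k
        = (alpha k, alpha k / w * (z + (w - z) * inverse (real (Suc (Suc k)))))"
        unfolding vs_def using 2 by simp
      have s1: "alpha (Suc k) \<le> alpha k / w * (z + (w - z) * inverse (real (Suc (Suc k))))"
        using helper(1)[OF zw 2 alpha_pos[of k], of k] by (simp add: alpha_Suc)
      have s2: "alpha k / w * (z + (w - z) * inverse (real (Suc (Suc k)))) \<le> alpha k"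
        using helper(2)[OF zw 2 alpha_pos[of k], of k] by simp
      show ?thesis unfolding e using conv_alpha(1)[OF s1 s2] assms by (auto simp: gph_def)
    qed
    have tl: "(\<lambda>k. alpha k / w) \<longlonglongrightarrow> 0"
      using tendsto_divide[OF alpha_lim tendsto_const[of w]] 2 by simp
    show ?thesis unfolding tangent_cone_def wz
      using mem tl vs_lim alpha_pos 2
      by (intro CollectI exI[of _ "\<lambda>k. alpha k / w"] exI[of _ vs]) auto
  next
    case 3
    then have zw: "0 \<le> - z" "- z \<le> - w" using p wz unfolding CC_def by auto
    have w3: "0 < - w" using 3 by simp
    have mem: "(0, 0) + (alpha k / (- w)) *\<^sub>R vs k \<in> gph F" for k
    proof -
      let ?s = "alpha k / (- w) * (- z + (- w - - z) * inverse (real (Suc (Suc k))))"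
      have e1: "alpha k / (- w) * w = - alpha k" using 3 by simp
      have e2: "alpha k / (- w) * (z + (w - z) * inverse (real (Suc (Suc k)))) = - ?s"
        by (simp add: algebra_simps)
      have e: "(0, 0) + (alpha k / (- w)) *\<^sub>R vs k = (- alpha k, - ?s)"
        unfolding vs_def using e1 e2 by simp
      have s1: "alpha (Suc k) \<le> ?s"
        using helper(1)[OF zw w3 alpha_pos[of k], of k] by (simp add: alpha_Suc)
      have s2: "?s \<le> alpha k"
        using helper(2)[OF zw w3 alpha_pos[of k], of k] by simp
      show ?thesis unfolding e using conv_alpha(2)[OF s1 s2] assms by (auto simp: gph_def)
    qed
    have tl: "(\<lambda>k. alpha k / (- w)) \<longlonglongrightarrow> 0"
      using tendsto_divide[OF alpha_lim tendsto_const[of "- w"]] 3 by simp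
    show ?thesis unfolding tangent_cone_def wz
      using mem tl vs_lim alpha_pos w3
      by (intro CollectI exI[of _ "\<lambda>k. alpha k / (- w)"] exI[of _ vs]) (auto simp: divide_pos_neg)
  qed
qed


lemma not_slm: "\<not> strong_local_min fex 0"
proof
  assume "strong_local_min fex 0"
  then obtain \<kappa> \<gamma> where kg: "\<kappa> > 0" "\<gamma> > 0"
    and q: "\<And>x. \<bar>x - 0\<bar> \<le> \<gamma> \<Longrightarrow> fex x - fex 0 \<ge> \<kappa> / 2 * \<bar>x - 0\<bar>\<^sup>2"
    unfolding strong_local_min_def by blast
  have ev1: "\<forall>\<^sub>F n in sequentially. alpha n < \<gamma>"
    using alpha_lim kg(2) by (simp add: order_tendsto_iff)
  obtain N :: nat where N: "2 / \<kappa> \<le> real N" using real_arch_simple by blast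
  have ev2: "\<forall>\<^sub>F n in sequentially. N \<le> n" by (rule eventually_ge_at_top)
  obtain n where n: "alpha n < \<gamma>" "N \<le> n"
    using eventually_happens'[OF _ eventually_conj[OF ev1 ev2]] by auto
  define a where "a = alpha n"
  have ap: "a > 0" unfolding a_def by (rule alpha_pos)
  have "\<bar>a - 0\<bar> \<le> \<gamma>" using n(1) ap unfolding a_def by simp
  then have "\<kappa> / 2 * \<bar>a - 0\<bar>\<^sup>2 \<le> fex a - fex 0" by (rule q)
  then have "\<kappa> / 2 * a\<^sup>2 \<le> fex a - fex 0" by simp
  also have "fex a = alpha (Suc n) * a + beta (Suc n)"
    using fpos_alpha[of n] ap unfolding a_def by (simp add: fex_abs LL_def)
  also have "fex 0 = betaL" by (rule fex0)
  finally have "\<kappa> / 2 * a\<^sup>2 \<le> alpha (Suc n) * a + beta (Suc n) - betaL" .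
  also have "\<dots> \<le> alpha (Suc n) * a" using beta_conv by simp
  also have "\<dots> = a\<^sup>2 / (real n + 2)" unfolding alpha_Suc a_def by (simp add: power2_eq_square)
  finally have "\<kappa> / 2 * a\<^sup>2 \<le> a\<^sup>2 / (real n + 2)" .
  then have "\<kappa> / 2 * a\<^sup>2 \<le> (1 / (real n + 2)) * a\<^sup>2" by simp
  moreover have "a\<^sup>2 > 0" using ap by simp
  ultimately have k1: "\<kappa> / 2 \<le> 1 / (real n + 2)" by (meson mult_le_cancel_right_pos)
  have "2 / \<kappa> \<le> real n" using N n(2) by linarith
  then have "2 \<le> \<kappa> * real n" using kg(1) by (simp add: field_simps)
  moreover have "\<kappa> * (real n + 2) \<le> 2" using k1 kg(1) by (simp add: field_simps)
  ultimately show False using kg(1) by (simp add: algebra_simps)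
qed

theorem mainTheorem3:
  shows "continuous_on UNIV fex
    \<and> convex_on UNIV fex
    \<and> (\<forall>x. fex 0 \<le> fex x)
    \<and> tangent_cone (gph (prox_subdiff fex)) (0, 0)
        = {(w, z). 0 \<le> z \<and> z \<le> w} \<union> {(w, z). 0 \<ge> z \<and> z \<ge> w}
    \<and> (\<forall>w \<in> graph_deriv_dom (prox_subdiff fex) 0 0. \<bar>w\<bar> = 1 \<longrightarrow>
          (\<exists>z \<in> graph_deriv (prox_subdiff fex) 0 0 w. z * w \<ge> 1))
    \<and> (\<exists>w z. w \<noteq> 0 \<and> z \<in> graph_deriv (conv_subdiff fex) 0 0 w \<and> z * w = 0)
    \<and> \<not> strong_local_min fex 0"
proof -
  have T: "tangent_cone (gph (prox_subdiff fex)) (0, 0) = CC"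
  proof
    show "tangent_cone (gph (prox_subdiff fex)) (0, 0) \<subseteq> CC"
    proof (rule tc_sub)
      fix x v assume "v \<in> prox_subdiff fex x"
      then have "(0 \<le> v \<and> v \<le> x) \<or> (v \<le> 0 \<and> x \<le> v)" by (rule prox_graph)
      then show "(x, v) \<in> CC" unfolding CC_def by blast
    qed
    show "CC \<subseteq> tangent_cone (gph (prox_subdiff fex)) (0, 0)"
      by (rule tc_sup) (rule subsetI, erule conv_prox)
  qed
  have T2: "CC \<subseteq> tangent_cone (gph (conv_subdiff fex)) (0, 0)"
    by (rule tc_sup) (rule subset_refl)
  have i5: "\<forall>w \<in> graph_deriv_dom (prox_subdiff fex) 0 0. \<bar>w\<bar> = 1 \<longrightarrow>
          (\<exists>z \<in> graph_deriv (prox_subdiff fex) 0 0 w. z * w \<ge> 1)"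
  proof (intro ballI impI)
    fix w :: real assume w: "\<bar>w\<bar> = 1"
    have "(w, w) \<in> CC" unfolding CC_def by auto
    then have g: "w \<in> graph_deriv (prox_subdiff fex) 0 0 w" using T by (simp add: graph_deriv_def)
    have "w * w = \<bar>w\<bar> * \<bar>w\<bar>" by (rule abs_mult_self_eq[symmetric])
    then have "w * w \<ge> 1" using w by simp
    with g show "\<exists>z \<in> graph_deriv (prox_subdiff fex) 0 0 w. z * w \<ge> 1" by blast
  qed
  have i6: "\<exists>w z. w \<noteq> 0 \<and> z \<in> graph_deriv (conv_subdiff fex) 0 0 w \<and> z * w = 0"
  proof (rule exI[of _ 1], rule exI[of _ 0])
    have "(1::real, 0::real) \<in> CC" unfolding CC_def by auto
    then show "(1::real) \<noteq> 0 \<and> (0::real) \<in> graph_deriv (conv_subdiff fex) 0 0 1 \<and> (0::real) * 1 = 0"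
      using T2 by (auto simp: graph_deriv_def)
  qed
  have i3: "\<forall>x. fex 0 \<le> fex x" using fex_ge_betaL by (simp add: fex0)
  have T': "tangent_cone (gph (prox_subdiff fex)) (0, 0)
        = {(w, z). 0 \<le> z \<and> z \<le> w} \<union> {(w, z). 0 \<ge> z \<and> z \<ge> w}"
    using T unfolding CC_def .
  show ?thesis
    by (intro conjI fex_cont fex_convex i3 T' i5 i6 not_slm)
qed

end
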